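(* Let $N$ be a positive integer, let $\Delta\neq 1$ be a fundamental discriminant, $r\in\mathbb{Z}$ with $\Delta\equiv r^2\pmod{4N}$, $h\in\mathcal{D}$ and $\ell\in\mathrm{Iso}(V)$. If $\mathfrak{d}_{\Delta,r}(\ell,h)\neq 0$, then $p^2\mid N$ for every prime $p\mid\Delta$. In particular, if $N$ is square-free and $\Delta\neq 1$, then $\mathfrak{d}_{\Delta,r}(\ell,h)=0$ always.
   Context: $V$ is the space of trace-zero rational $2\times2$ matrices with $Q(\lambda)=N\det\lambda$ and $(\lambda,\mu)=-N\operatorname{tr}(\lambda\mu)$; $\mathrm{Iso}(V)$ is the set of isotropic lines in $V$. $L=\left\{\begin{pmatrix} b & -a/N\\ c & -b\end{pmatrix}: a,b,c\in\mathbb{Z}\right\}$, $L'=\left\{\begin{pmatrix} b/2N & -a/N\\ c & -b/2N\end{pmatrix}: a,b,c\in\mathbb{Z}\right\}$, $\mathcal{D}=L'/L$. For $\ell\in\mathrm{Iso}(V)$ let $\lambda_\ell$ be a primitive generator of $\ell\cap L$. For $k\in\mathcal{D}$ (viewed as a coset $L+k\subset L'$) put $\delta_\ell(k)=1$ if $\ell\cap(L+k)\neq\emptyset$ and $\delta_\ell(k)=0$ otherwise. If $\delta_\ell(k)=1$, then $\ell\cap(L+k)=\mathbb{Z}\lambda_\ell+k_\ell$ for some $k_\ell=s\lambda_\ell$, $s\in\mathbb{Q}$; writing $s=u/w$ in lowest terms ($w>0$) define $d(\ell,k)=w$ (it depends only on $\ell$ and $k$) and $k'_\ell=\frac{1}{d(\ell,k)}\lambda_\ell$.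 For $\delta=\begin{pmatrix} b/2N & -a/N\\ c & -b/2N\end{pmatrix}\in L'$, $\chi_\Delta(\delta)=\left(\frac{\Delta}{n}\right)$ if $\Delta\mid b^2-4Nac$, $(b^2-4Nac)/\Delta$ is a square mod $4N$ and $\gcd(a,b,c,\Delta)=1$ ($n$ any integer coprime to $\Delta$ represented by $[a,b,Nc]$), else $0$. For $\Delta\neq1$ define $\mathfrak{d}_{\Delta,r}(\ell,h)=\chi_\Delta((rh)'_\ell)$ if $\delta_\ell(rh)=1$ and $\Delta\mid d(\ell,rh)$, and $\mathfrak{d}_{\Delta,r}(\ell,h)=0$ otherwise. *)

theory Defs
  imports "HOL-Number_Theory.Number_Theory" "HOL-Computational_Algebra.Squarefree"
begin

text \<open>Elements of V (trace-zero rational 2x2 matrices): the triple (x, y, z) stands for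
  the matrix with rows (x, y) and (z, -x).\<close>
type_synonym tzmat = "rat \<times> rat \<times> rat"

definition tz_smult :: "rat \<Rightarrow> tzmat \<Rightarrow> tzmat" where
  "tz_smult t v = (case v of (x, y, z) \<Rightarrow> (t * x, t * y, t * z))"

definition tz_add :: "tzmat \<Rightarrow> tzmat \<Rightarrow> tzmat" where
  "tz_add v w = (case v of (x, y, z) \<Rightarrow> case w of (x', y', z') \<Rightarrow> (x + x', y + y', z + z'))"

definition tz_det :: "tzmat \<Rightarrow> rat" where
  "tz_det v = (case v of (x, y, z) \<Rightarrow> - x * x - y * z)"

definition QV :: "nat \<Rightarrow> tzmat \<Rightarrow> rat" where
  "QV N v = of_nat N * tz_det v"

definition IsoV :: "nat \<Rightarrow> tzmat set set" where
  "IsoV N = {l. \<exists>v. v \<noteq> (0, 0, 0) \<and> QV N v = 0 \<and> l = range (\<lambda>t. tz_smult t v)}"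

text \<open>The lattice L: b, c integers, upper right entry -a/N with a integer.\<close>
definition Lat :: "nat \<Rightarrow> tzmat set" where
  "Lat N = {(x, y, z). x \<in> \<int> \<and> of_nat N * y \<in> \<int> \<and> z \<in> \<int>}"

definition Lat' :: "nat \<Rightarrow> tzmat set" where
  "Lat' N = {(x, y, z). 2 * of_nat N * x \<in> \<int> \<and> of_nat N * y \<in> \<int> \<and> z \<in> \<int>}"

definition coset :: "nat \<Rightarrow> tzmat \<Rightarrow> tzmat set" where
  "coset N k = {tz_add w k | w. w \<in> Lat N}"

definition prim_gen :: "nat \<Rightarrow> tzmat set \<Rightarrow> tzmat \<Rightarrow> bool" where
  "prim_gen N l lam \<longleftrightarrow> lam \<noteq> (0, 0, 0) \<and> lam \<in> l \<inter> Lat N \<and>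
      l \<inter> Lat N = range (\<lambda>m::int. tz_smult (of_int m) lam)"

definition delta_l :: "nat \<Rightarrow> tzmat set \<Rightarrow> tzmat \<Rightarrow> int" where
  "delta_l N l k = (if l \<inter> coset N k \<noteq> {} then 1 else 0)"

text \<open>d(l,k): the denominator (in lowest terms, positive) of s, where s * lam_l lies in
  l \<inter> (L + k).\<close>
definition dlk :: "nat \<Rightarrow> tzmat \<Rightarrow> tzmat \<Rightarrow> int" where
  "dlk N lam k = snd (quotient_of (SOME s. tz_smult s lam \<in> coset N k))"

definition kron_prime :: "int \<Rightarrow> nat \<Rightarrow> int" where
  "kron_prime D p = (if p = 2 then (if even D then 0 else if D mod 8 \<in> {1, 7} then 1 else -1)
                     else Legendre D (int p))"

definition kronecker :: "int \<Rightarrow> int \<Rightarrow> int" where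
  "kronecker D n = (if n = 0 then (if \<bar>D\<bar> = 1 then 1 else 0)
     else (if n < 0 \<and> D < 0 then -1 else 1) *
          (\<Prod>p\<in>prime_factors (nat \<bar>n\<bar>). kron_prime D p ^ multiplicity p (nat \<bar>n\<bar>)))"

definition fundamental_disc :: "int \<Rightarrow> bool" where
  "fundamental_disc D \<longleftrightarrow> (D mod 4 = 1 \<and> squarefree D) \<or>
     (\<exists>m. D = 4 * m \<and> m mod 4 \<in> {2, 3} \<and> squarefree m)"

text \<open>The generalized genus character chi_Delta on L'. An element of L' is written
  (b/2N, -a/N, c); outside L' we put 0 (it is only applied to elements of L').\<close>
definition chi :: "nat \<Rightarrow> int \<Rightarrow> tzmat \<Rightarrow> int" where
  "chi N D v = (case v of (x, y, z) \<Rightarrow>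
     if v \<in> Lat' N then
       (let a = \<lfloor>- of_nat N * y\<rfloor>; b = \<lfloor>2 * of_nat N * x\<rfloor>; c = \<lfloor>z\<rfloor>;
            disc = b^2 - 4 * int N * a * c in
        if D dvd disc \<and> (\<exists>t. [disc div D = t^2] (mod (4 * int N))) \<and> gcd (gcd a b) (gcd c D) = 1
        then kronecker D (SOME n. coprime n D \<and> (\<exists>s t. n = a * s^2 + b * s * t + int N * c * t^2))
        else 0)
     else 0)"

definition frakd :: "nat \<Rightarrow> int \<Rightarrow> int \<Rightarrow> tzmat set \<Rightarrow> tzmat \<Rightarrow> tzmat \<Rightarrow> int" where
  "frakd N D r l lam h =
     (let k = tz_smult (of_int r) h in
      if delta_l N l k = 1 \<and> D dvd dlk N lam k
      then chi N D (tz_smult (1 / of_int (dlk N lam k)) lam) else 0)"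

end

theory Submission
  imports Defs
begin

lemma ints_div_mul:
  fixes u :: rat and p q :: int
  assumes "u / of_int (p * q) \<in> \<int>" "q \<noteq> 0"
  shows "u / of_int p \<in> \<int>"
proof -
  have "u / of_int p = of_int q * (u / of_int (p * q))" using assms(2) by (simp add: field_simps)
  thus ?thesis using assms(1) by (metis Ints_mult Ints_of_int)
qed

lemma key:
  fixes N :: nat and D r :: int and h lam :: tzmat and l :: "tzmat set"
  assumes "N > 0"
    and "l \<in> IsoV N"
    and "prim_gen N l lam"
    and nz: "frakd N D r l lam h \<noteq> 0"
    and p: "prime p" "p dvd D"
  shows "p^2 dvd int N"
proof -
  obtain x y z where lamd: "lam = (x, y, z)" by (cases lam) auto
  from assms(3) have lnz: "lam \<noteq> (0,0,0)" and laml: "lam \<in> l" and lamL: "lam \<in> Lat N"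
    and rng: "l \<inter> Lat N = range (\<lambda>m::int. tz_smult (of_int m) lam)"
    unfolding prim_gen_def by auto
  from assms(2) obtain v where v: "QV N v = 0" "l = range (\<lambda>t. tz_smult t v)"
    unfolding IsoV_def by auto
  obtain t where lt: "lam = tz_smult t v" using laml v(2) by auto
  obtain v1 v2 v3 where vd: "v = (v1, v2, v3)" by (cases v) auto
  have "tz_det v = 0" using v(1) assms(1) unfolding QV_def by simp
  hence dv: "- v1*v1 - v2*v3 = 0" by (simp add: tz_det_def vd)
  have comp: "x = t*v1" "y = t*v2" "z = t*v3" using lt lamd vd by (auto simp: tz_smult_def)
  have iso: "x*x = - y*z"
  proof -
    have "x*x + y*z = t*t*(v1*v1 + v2*v3)" using comp by (simp add: algebra_simps)
    moreover have "v1*v1 + v2*v3 = 0" using dv by linarith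
    ultimately have "x*x + y*z = 0" by simp
    thus ?thesis by linarith
  qed
  define dd where "dd = dlk N lam (tz_smult (of_int r) h)"
  have dpos: "dd > 0" unfolding dd_def dlk_def using quotient_of_denom_pos' by blast
  from nz have Ddd: "D dvd dd" and chinz: "chi N D (tz_smult (1 / of_int dd) lam) \<noteq> 0"
    unfolding frakd_def dd_def Let_def by (auto split: if_splits)
  have inL': "tz_smult (1 / of_int dd) lam \<in> Lat' N"
    using chinz unfolding chi_def by (auto split: prod.splits if_splits)
  hence i2: "of_nat N * y / of_int dd \<in> \<int>" and i3: "z / of_int dd \<in> \<int>"
    by (auto simp: Lat'_def tz_smult_def lamd)
  from p Ddd obtain q where dq: "dd = p * q" by (meson dvd_trans dvd_def)
  have "q \<noteq> 0" using dq dpos by auto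
  have j2: "of_nat N * y / of_int p \<in> \<int>" using ints_div_mul[OF _ \<open>q\<noteq>0\<close>] i2 dq by simp
  have j3: "z / of_int p \<in> \<int>" using ints_div_mul[OF _ \<open>q\<noteq>0\<close>] i3 dq by simp
  from lamL have "x \<in> \<int>" "of_nat N * y \<in> \<int>" "z \<in> \<int>" by (auto simp: Lat_def lamd)
  then obtain B A C where B: "x = of_int B" and A: "of_nat N * y = of_int A" and C: "z = of_int C"
    by (metis Ints_cases)
  have pne: "p \<noteq> 0" using p(1) by auto
  have pA: "p dvd A"
  proof -
    from j2 obtain e where "of_nat N * y / of_int p = of_int e" by (metis Ints_cases)
    hence "of_int A = (of_int (p*e) :: rat)" using A pne by (auto simp: field_simps)
    hence "A = p * e" by (simp only: of_int_eq_iff)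
    thus ?thesis by simp
  qed
  have pC: "p dvd C"
  proof -
    from j3 obtain e where "z / of_int p = of_int e" by (metis Ints_cases)
    hence "of_int C = (of_int (p*e) :: rat)" using C pne by (auto simp: field_simps)
    hence "C = p * e" by (simp only: of_int_eq_iff)
    thus ?thesis by simp
  qed
  have pB: "\<not> p dvd B"
  proof
    assume "p dvd B"
    then obtain b' where b': "B = p * b'" by auto
    obtain a' where a': "A = p * a'" using pA by auto
    obtain c' where c': "C = p * c'" using pC by auto
    have p0: "(of_int p :: rat) \<noteq> 0" using pne by simp
    define w where "w = tz_smult (1 / of_int p) lam"
    have "w = (of_int b', y / of_int p, of_int c')"
      using p0 by (simp add: w_def tz_smult_def lamd B C b' c')
    moreover have "of_nat N * (y / of_int p) = of_int a'"
      using A a' p0 by (simp add: field_simps)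
    ultimately have "w \<in> Lat N" by (auto simp: Lat_def)
    moreover have "w = tz_smult (t / of_int p) v" unfolding w_def lt by (simp add: tz_smult_def vd)
    hence "w \<in> l" using v(2) by auto
    ultimately have "w \<in> range (\<lambda>m::int. tz_smult (of_int m) lam)" using rng by blast
    then obtain m where m: "tz_smult (1 / of_int p) lam = tz_smult (of_int m) lam"
      unfolding w_def by auto
    have "1 / of_int p = (of_int m :: rat)"
    proof (rule ccontr)
      assume ne: "1 / of_int p \<noteq> (of_int m :: rat)"
      from m have "(1 / of_int p - of_int m) * x = 0" "(1 / of_int p - of_int m) * y = 0"
        "(1 / of_int p - of_int m) * z = 0"
        by (auto simp: tz_smult_def lamd algebra_simps)
      hence "x = 0" "y = 0" "z = 0" using ne by auto
      thus False using lnz lamd by simp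
    qed
    hence "(1::rat) = of_int (p * m)" using p0 by (simp add: field_simps)
    hence "(of_int (p*m) :: rat) = of_int 1" by simp
    hence "p * m = 1" by (simp only: of_int_eq_iff)
    hence "is_unit p" using dvd_triv_left[of p m] by simp
    thus False using p(1) not_prime_unit by blast
  qed
  have eq: "int N * B^2 = - (A * C)"
  proof -
    have "(of_int (int N * B^2) :: rat) = of_nat N * (x*x)" by (simp add: B power2_eq_square)
    also have "\<dots> = - ((of_nat N * y) * z)" using iso by (simp add: algebra_simps)
    also have "\<dots> = of_int (- (A*C))" by (simp add: A C)
    finally show ?thesis by (simp only: of_int_eq_iff)
  qed
  have "p^2 dvd A * C" using pA pC by (simp add: power2_eq_square mult_dvd_mono)
  hence "p^2 dvd int N * B^2" using eq by simp
  moreover have "coprime (p^2) (B^2)" using pB p(1) by (simp add: prime_imp_coprime)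
  ultimately show ?thesis by (metis coprime_dvd_mult_left_iff)
qed

theorem proposition5p4:
  fixes N :: nat and D r :: int and h lam :: tzmat and l :: "tzmat set"
  assumes "N > 0"
    and "fundamental_disc D" and "D \<noteq> 1"
    and "[D = r^2] (mod (4 * int N))"
    and "h \<in> Lat' N"
    and "l \<in> IsoV N"
    and "prim_gen N l lam"
  shows "(frakd N D r l lam h \<noteq> 0 \<longrightarrow> (\<forall>p::int. prime p \<longrightarrow> p dvd D \<longrightarrow> p^2 dvd int N))
       \<and> (squarefree N \<longrightarrow> frakd N D r l lam h = 0)"
proof -
  have A: "frakd N D r l lam h \<noteq> 0 \<Longrightarrow> prime p \<Longrightarrow> p dvd D \<Longrightarrow> p^2 dvd int N" for p
    using key[OF assms(1,6,7)] by blast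
  have "\<not> is_unit D"
  proof
    assume "is_unit D"
    hence "D = 1 \<or> D = -1" by auto
    thus False using assms(2,3) unfolding fundamental_disc_def by auto
  qed
  moreover have "D \<noteq> 0" using assms(2) unfolding fundamental_disc_def by auto
  ultimately obtain p where pp: "prime p" "p dvd D" using prime_divisor_exists by blast
  have B: "squarefree N \<longrightarrow> frakd N D r l lam h = 0"
  proof (intro impI, rule ccontr)
    assume sq: "squarefree N" and nz: "frakd N D r l lam h \<noteq> 0"
    have "p^2 dvd int N" using A[OF nz pp] .
    obtain n where pn: "p = int n" using prime_ge_0_int[OF pp(1)] nonneg_int_cases by blast
    have "int (n^2) dvd int N" using \<open>p^2 dvd int N\<close> pn by simp
    hence "n * n dvd N" by (simp only: of_nat_dvd_iff power2_eq_square)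
    hence "is_unit n" using sq by (simp add: squarefree_def power2_eq_square)
    hence "p = 1" using pn by simp
    thus False using pp(1) by simp
  qed
  show ?thesis using A B by blast
qed

end
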